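(* Let $n\ge 1$, $M\ge1$ be integers and $a=(a_0,\dots,a_n)\in\mathbb{Z}^{n+1}$ with $0\le a_i\le M$ and $a_0=a_n=0$. Let $G(a)$ be the directed graph defined below. Then all tropical recurrent minimal sequences with values in $V$ satisfying $a$ are periodic if and only if $G(a)$ is a disjoint union of simple cycles.
   Context: Let $V=\{j+i/(2n+2): 0\le j<M,\ 0\le i\le 2n+2,\ i,j\in\mathbb{Z}\}$ and $W=V^{2n+1}$. A vector $z=(z_0,\dots,z_N)\in\mathbb{R}^{N+1}$ satisfies $a$ and is minimal if for each $0\le k\le N-n$ the minimum $\min_{0\le i\le n}\{a_i+z_{i+k}\}$ is attained at least twice, and for each $n\le j\le N-n$ there exists $j-n\le k\le j$ with $a_{j-k}+z_j=\min_{0\le i\le n}\{a_i+z_{k+i}\}$. The directed graph $G_0$ has as vertices the elements $(z_0,\dots,z_{2n})\in W$ which (with $N=2n$) satisfy $a$ and are minimal, with an arrow from $(z_0,\dots,z_{2n})$ to $(z'_0,\dots,z'_{2n})$ iff $z_{i+1}=z'_i$ for $0\le i\le 2n-1$ (loops allowed). $G(a)$ is obtained from $G_0$ by successively removing vertices having no incoming arrow or no outgoing arrow, as long as possible. A tropical recurrent sequence is $y=(y_j)_{j\in\mathbb{Z}}$ with real entries; it satisfies $a$ if for every $k\in\mathbb{Z}$ the minimum $\min_{0\le i\le n}\{a_i+y_{i+k}\}$ is attained for at least two different $i$; it is minimal if for every $j$ there is $k$ with $j-n\le k\le j$ and $a_{j-k}+y_j=\min_{0\le i\le n}\{a_i+y_{i+k}\}$.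 It is periodic if there is $d\ge1$ with $y_{j+d}=y_j$ for all $j$. *)

theory Defs
  imports Main "HOL.Real"
begin

definition Vset :: "nat \<Rightarrow> nat \<Rightarrow> real set" where
  "Vset n M = {real j + real i / real (2*n+2) | i j. j < M \<and> i \<le> 2*n+2}"

text \<open>Finite vectors z = (z_0,...,z_N) are represented as lists of length N+1.\<close>
definition fin_tmin :: "(nat \<Rightarrow> int) \<Rightarrow> nat \<Rightarrow> real list \<Rightarrow> nat \<Rightarrow> real" where
  "fin_tmin a n z k = Min ((\<lambda>i. real_of_int (a i) + z ! (i + k)) ` {0..n})"

definition fin_satisfies :: "(nat \<Rightarrow> int) \<Rightarrow> nat \<Rightarrow> nat \<Rightarrow> real list \<Rightarrow> bool" where
  "fin_satisfies a n N z \<longleftrightarrow>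
     (\<forall>k. k + n \<le> N \<longrightarrow>
        (\<exists>i1 i2. i1 \<le> n \<and> i2 \<le> n \<and> i1 \<noteq> i2 \<and>
           real_of_int (a i1) + z ! (i1 + k) = fin_tmin a n z k \<and>
           real_of_int (a i2) + z ! (i2 + k) = fin_tmin a n z k))"

definition fin_minimal :: "(nat \<Rightarrow> int) \<Rightarrow> nat \<Rightarrow> nat \<Rightarrow> real list \<Rightarrow> bool" where
  "fin_minimal a n N z \<longleftrightarrow>
     (\<forall>j. n \<le> j \<and> j + n \<le> N \<longrightarrow>
        (\<exists>k. j \<le> k + n \<and> k \<le> j \<and>
           real_of_int (a (j - k)) + z ! j = fin_tmin a n z k))"

definition G0_verts :: "(nat \<Rightarrow> int) \<Rightarrow> nat \<Rightarrow> nat \<Rightarrow> real list set" where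
  "G0_verts a n M = {z. length z = 2*n+1 \<and> set z \<subseteq> Vset n M \<and>
                        fin_satisfies a n (2*n) z \<and> fin_minimal a n (2*n) z}"

definition G0_edges :: "(nat \<Rightarrow> int) \<Rightarrow> nat \<Rightarrow> nat \<Rightarrow> (real list \<times> real list) set" where
  "G0_edges a n M = {(z, z'). z \<in> G0_verts a n M \<and> z' \<in> G0_verts a n M \<and>
                        (\<forall>i < 2*n. z ! (i+1) = z' ! i)}"

text \<open>Vertices removed by successively deleting vertices having no incoming arrow
  or no outgoing arrow (among the vertices not yet removed), as long as possible.\<close>
inductive removed :: "'v set \<Rightarrow> ('v \<times> 'v) set \<Rightarrow> 'v \<Rightarrow> bool" for VS E where
  no_in: "v \<in> VS \<Longrightarrow> (\<forall>u. u \<in> VS \<and> (u, v) \<in> E \<longrightarrow> removed VS E u) \<Longrightarrow> removed VS E v"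
| no_out: "v \<in> VS \<Longrightarrow> (\<forall>w. w \<in> VS \<and> (v, w) \<in> E \<longrightarrow> removed VS E w) \<Longrightarrow> removed VS E v"

definition Ga_verts :: "(nat \<Rightarrow> int) \<Rightarrow> nat \<Rightarrow> nat \<Rightarrow> real list set" where
  "Ga_verts a n M = {v \<in> G0_verts a n M. \<not> removed (G0_verts a n M) (G0_edges a n M) v}"

definition Ga_edges :: "(nat \<Rightarrow> int) \<Rightarrow> nat \<Rightarrow> nat \<Rightarrow> (real list \<times> real list) set" where
  "Ga_edges a n M = G0_edges a n M \<inter> (Ga_verts a n M \<times> Ga_verts a n M)"

definition cycle_edges :: "'v list \<Rightarrow> ('v \<times> 'v) set" where
  "cycle_edges c = {(c ! i, c ! ((i + 1) mod length c)) | i. i < length c}"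

definition disjoint_union_of_simple_cycles :: "'v set \<Rightarrow> ('v \<times> 'v) set \<Rightarrow> bool" where
  "disjoint_union_of_simple_cycles VS E \<longleftrightarrow>
     (\<exists>C. (\<forall>c \<in> C. c \<noteq> [] \<and> distinct c) \<and>
          (\<forall>c \<in> C. \<forall>c' \<in> C. c \<noteq> c' \<longrightarrow> set c \<inter> set c' = {}) \<and>
          (\<Union>c \<in> C. set c) = VS \<and>
          E = (\<Union>c \<in> C. cycle_edges c))"

definition tmin :: "(nat \<Rightarrow> int) \<Rightarrow> nat \<Rightarrow> (int \<Rightarrow> real) \<Rightarrow> int \<Rightarrow> real" where
  "tmin a n y k = Min ((\<lambda>i. real_of_int (a i) + y (int i + k)) ` {0..n})"

definition trop_satisfies :: "(nat \<Rightarrow> int) \<Rightarrow> nat \<Rightarrow> (int \<Rightarrow> real) \<Rightarrow> bool" where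
  "trop_satisfies a n y \<longleftrightarrow>
     (\<forall>k. \<exists>i1 i2. i1 \<le> n \<and> i2 \<le> n \<and> i1 \<noteq> i2 \<and>
         real_of_int (a i1) + y (int i1 + k) = tmin a n y k \<and>
         real_of_int (a i2) + y (int i2 + k) = tmin a n y k)"

definition trop_minimal :: "(nat \<Rightarrow> int) \<Rightarrow> nat \<Rightarrow> (int \<Rightarrow> real) \<Rightarrow> bool" where
  "trop_minimal a n y \<longleftrightarrow>
     (\<forall>j. \<exists>k. j - int n \<le> k \<and> k \<le> j \<and>
         real_of_int (a (nat (j - k))) + y j = tmin a n y k)"

definition trop_periodic :: "(int \<Rightarrow> real) \<Rightarrow> bool" where
  "trop_periodic y \<longleftrightarrow> (\<exists>d::int. d \<ge> 1 \<and> (\<forall>j. y (j + d) = y j))"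

end

theory Submission
  imports Defs
begin

definition walk :: "('v \<times> 'v) set \<Rightarrow> (int \<Rightarrow> 'v) \<Rightarrow> bool" where
  "walk E p \<longleftrightarrow> (\<forall>j. (p j, p (j+1)) \<in> E)"

definition per :: "(int \<Rightarrow> 'v) \<Rightarrow> bool" where
  "per p \<longleftrightarrow> (\<exists>d::int. d \<ge> 1 \<and> (\<forall>j. p (j+d) = p j))"

lemma per_mult:
  assumes "\<forall>j. p (j+d) = p j"
  shows "p (j - int m * d) = p j"
proof (induction m)
  case 0 then show ?case by simp
next
  case (Suc m)
  have "p (j - int (Suc m) * d) = p ((j - int (Suc m) * d) + d)" using assms by simp
  also have "(j - int (Suc m) * d) + d = j - int m * d" by (simp add: algebra_simps)
  finally show ?case using Suc by simp
qed

lemma per_mult_pos: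
  assumes "\<forall>j. p (j+d) = p j"
  shows "p (j + int m * d) = p j"
proof (induction m)
  case 0 then show ?case by simp
next
  case (Suc m)
  have "p (j + int (Suc m) * d) = p ((j + int m * d) + d)" by (simp add: algebra_simps)
  also have "\<dots> = p (j + int m * d)" using assms by simp
  finally show ?case using Suc by simp
qed

lemma removed_not_walk:
  assumes "removed VS E v" "E \<subseteq> VS \<times> VS"
  shows "\<forall>p j. walk E p \<longrightarrow> p j = v \<longrightarrow> False"
  using assms
proof (induction rule: removed.induct)
  case (no_in v)
  show ?case
  proof (intro allI impI)
    fix p j assume w: "walk E p" and pj: "p j = v"
    have e: "(p (j-1), v) \<in> E" using w pj unfolding walk_def by (metis diff_add_cancel)
    then have "p (j-1) \<in> VS" using no_in.prems by auto
    then have "E \<subseteq> VS \<times> VS \<longrightarrow> (\<forall>p. walk E p \<longrightarrow> (\<forall>j'. p j' \<noteq> p0))" if "p0 = p (j-1)" for p0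
      using no_in.IH e that by auto
    then show False using w no_in.prems by blast
  qed
next
  case (no_out v)
  show ?case
  proof (intro allI impI)
    fix p j assume w: "walk E p" and pj: "p j = v"
    have e: "(v, p (j+1)) \<in> E" using w pj unfolding walk_def by metis
    then have "p (j+1) \<in> VS" using no_out.prems by auto
    then have "E \<subseteq> VS \<times> VS \<longrightarrow> (\<forall>p. walk E p \<longrightarrow> (\<forall>j'. p j' \<noteq> p0))" if "p0 = p (j+1)" for p0
      using no_out.IH e that by auto
    then show False using w no_out.prems by blast
  qed
qed

lemma walk_core:
  assumes "walk E p" "E \<subseteq> VS \<times> VS"
  shows "walk (E \<inter> ({v\<in>VS. \<not> removed VS E v} \<times> {v\<in>VS. \<not> removed VS E v})) p"
proof -
  have "p j \<in> VS \<and> \<not> removed VS E (p j)" for j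
    using assms removed_not_walk[of VS E "p j"] unfolding walk_def by blast
  then show ?thesis using assms unfolding walk_def by auto
qed

lemma core_succ:
  assumes "v \<in> VS" "\<not> removed VS E v"
  shows "\<exists>w. w \<in> VS \<and> \<not> removed VS E w \<and> (v,w) \<in> E"
proof (rule ccontr)
  assume "\<not> ?thesis"
  then have "\<forall>w. w \<in> VS \<and> (v, w) \<in> E \<longrightarrow> removed VS E w" by blast
  then have "removed VS E v" using assms(1) removed.no_out by metis
  then show False using assms(2) by simp
qed

lemma core_pred:
  assumes "v \<in> VS" "\<not> removed VS E v"
  shows "\<exists>u. u \<in> VS \<and> \<not> removed VS E u \<and> (u,v) \<in> E"
proof (rule ccontr)
  assume "\<not> ?thesis"
  then have "\<forall>u. u \<in> VS \<and> (u, v) \<in> E \<longrightarrow> removed VS E u" by blast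
  then have "removed VS E v" using assms(1) removed.no_in by metis
  then show False using assms(2) by simp
qed

lemma exists_walk:
  assumes out: "\<forall>v\<in>K. \<exists>w\<in>K. (v,w)\<in>E" and inn: "\<forall>v\<in>K. \<exists>u\<in>K. (u,v)\<in>E" and v: "v \<in> K"
  shows "\<exists>p. walk E p \<and> p 0 = v \<and> (\<forall>j. p j \<in> K)"
proof -
  define f where "f = rec_nat v (\<lambda>_ x. SOME w. w\<in>K \<and> (x,w)\<in>E)"
  define g where "g = rec_nat v (\<lambda>_ x. SOME u. u\<in>K \<and> (u,x)\<in>E)"
  have f: "f k \<in> K \<and> f (Suc k) \<in> K \<and> (f k, f (Suc k)) \<in> E" for k
  proof (induction k)
    case 0
    have "f (Suc 0) = (SOME w. w\<in>K \<and> (v,w)\<in>E)" "f 0 = v" by (simp_all add: f_def)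
    then show ?case using someI_ex[of "\<lambda>w. w\<in>K \<and> (v,w)\<in>E"] out v by auto
  next
    case (Suc k)
    have "f (Suc (Suc k)) = (SOME w. w\<in>K \<and> (f (Suc k),w)\<in>E)" by (simp add: f_def)
    then show ?case using someI_ex[of "\<lambda>w. w\<in>K \<and> (f (Suc k),w)\<in>E"] out Suc by auto
  qed
  have g: "g k \<in> K \<and> g (Suc k) \<in> K \<and> (g (Suc k), g k) \<in> E" for k
  proof (induction k)
    case 0
    have "g (Suc 0) = (SOME u. u\<in>K \<and> (u,v)\<in>E)" "g 0 = v" by (simp_all add: g_def)
    then show ?case using someI_ex[of "\<lambda>u. u\<in>K \<and> (u,v)\<in>E"] inn v by auto
  next
    case (Suc k)
    have "g (Suc (Suc k)) = (SOME u. u\<in>K \<and> (u, g (Suc k))\<in>E)" by (simp add: g_def)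
    then show ?case using someI_ex[of "\<lambda>u. u\<in>K \<and> (u, g (Suc k))\<in>E"] inn Suc by auto
  qed
  have g0: "g 0 = v" "f 0 = v" by (simp_all add: f_def g_def)
  define p where "p j = (if j \<ge> 0 then f (nat j) else g (nat (-j)))" for j
  have "walk E p" unfolding walk_def
  proof
    fix j :: int
    show "(p j, p (j+1)) \<in> E"
    proof (cases "j \<ge> 0")
      case True
      then have "nat (j+1) = Suc (nat j)" by simp
      then show ?thesis using True f unfolding p_def by simp
    next
      case False
      show ?thesis
      proof (cases "j = -1")
        case True then show ?thesis using g[of 0] g0 unfolding p_def by simp
      next
        case False
        then have "nat (-j) = Suc (nat (-(j+1)))" "\<not> j+1 \<ge> 0" using \<open>\<not> j \<ge> 0\<close> by auto
        then show ?thesis using \<open>\<not> j \<ge> 0\<close> g unfolding p_def by simp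
      qed
    qed
  qed
  moreover have "p j \<in> K" for j using f g unfolding p_def by auto
  ultimately show ?thesis using g0 unfolding p_def by auto
qed

lemma glue:
  assumes "walk E p" "walk E q" "p 0 = q 0"
  shows "walk E (\<lambda>j. if j \<le> 0 then p j else q j)"
  unfolding walk_def
proof
  fix j :: int
  show "((if j \<le> 0 then p j else q j), (if j+1 \<le> 0 then p (j+1) else q (j+1))) \<in> E"
  proof (cases "j+1 \<le> 0")
    case True then show ?thesis using assms(1) unfolding walk_def by simp
  next
    case False
    show ?thesis
    proof (cases "j = 0")
      case True then show ?thesis using assms(2)[unfolded walk_def, rule_format, of 0] assms(3) by simp
    next
      case False
      then show ?thesis using \<open>\<not> j+1 \<le> 0\<close> assms(2) unfolding walk_def by simp
    qed
  qed
qed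

lemma glue_edge:
  assumes "walk E p" "walk E q" "(p 0, q 0) \<in> E"
  shows "walk E (\<lambda>j. if j \<le> 0 then p j else q (j-1))"
  unfolding walk_def
proof
  fix j :: int
  show "((if j \<le> 0 then p j else q (j-1)), (if j+1 \<le> 0 then p (j+1) else q (j+1-1))) \<in> E"
  proof (cases "j+1 \<le> 0")
    case True then show ?thesis using assms(1) unfolding walk_def by simp
  next
    case False
    show ?thesis
    proof (cases "j = 0")
      case True then show ?thesis using assms(3) by simp
    next
      case False
      then have "\<not> j \<le> 0" "\<not> j+1 \<le> 0" "j+1-1 = (j-1)+1" using \<open>\<not> j+1 \<le> 0\<close> by auto
      moreover have "(q (j-1), q ((j-1)+1)) \<in> E" using assms(2) unfolding walk_def by blast
      ultimately show ?thesis by (simp only: if_False)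
    qed
  qed
qed


lemma outdeg_unique:
  assumes EK: "E \<subseteq> K \<times> K"
    and out: "\<forall>v\<in>K. \<exists>w\<in>K. (v,w)\<in>E" and inn: "\<forall>v\<in>K. \<exists>u\<in>K. (u,v)\<in>E"
    and H: "\<forall>p. walk E p \<longrightarrow> per p"
    and e1: "(v,w1) \<in> E" and e2: "(v,w2) \<in> E"
  shows "w1 = w2"
proof -
  have K: "v \<in> K" "w1 \<in> K" "w2 \<in> K" using EK e1 e2 by auto
  obtain pv where pv: "walk E pv" "pv 0 = v" using exists_walk[OF out inn K(1)] by blast
  obtain q1 where q1: "walk E q1" "q1 0 = w1" using exists_walk[OF out inn K(2)] by blast
  obtain q2 where q2: "walk E q2" "q2 0 = w2" using exists_walk[OF out inn K(3)] by blast
  define P1 where "P1 = (\<lambda>j. if j \<le> 0 then pv j else q1 (j-1))"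
  define P2 where "P2 = (\<lambda>j. if j \<le> 0 then pv j else q2 (j-1))"
  have wP1: "walk E P1" unfolding P1_def by (rule glue_edge) (use pv q1 e1 in auto)
  have wP2: "walk E P2" unfolding P2_def by (rule glue_edge) (use pv q2 e2 in auto)
  have P10: "P1 0 = v" "P1 1 = w1" using pv q1 unfolding P1_def by auto
  have P20: "P2 0 = v" "P2 1 = w2" using pv q2 unfolding P2_def by auto
  obtain d1 where d1: "d1 \<ge> 1" "\<forall>j. P1 (j+d1) = P1 j" using H wP1 unfolding per_def by blast
  define Q where "Q = (\<lambda>j. if j \<le> 0 then P1 j else P2 j)"
  have wQ: "walk E Q" unfolding Q_def by (rule glue) (use wP1 wP2 P10 P20 in auto)
  obtain d where d: "d \<ge> 1" "\<forall>j. Q (j+d) = Q j" using H wQ unfolding per_def by blast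
  have "Q (1 - int (nat d1) * d) = Q 1" using per_mult[OF d(2)] by blast
  moreover have "Q 1 = w2" using P20 unfolding Q_def by simp
  moreover have "1 - int (nat d1) * d \<le> 0"
  proof -
    have "d1 * d \<ge> 1 * 1" by (rule mult_mono) (use d d1 in auto)
    then show ?thesis using d1 by simp
  qed
  moreover have "P1 (1 - int (nat d) * d1) = P1 1" using per_mult[OF d1(2)] by blast
  moreover have "int (nat d1) * d = int (nat d) * d1" using d d1 by simp
  ultimately show ?thesis using P10 unfolding Q_def by auto
qed


definition Lv :: "('v \<Rightarrow> 'v) \<Rightarrow> 'v \<Rightarrow> nat" where
  "Lv s v = (LEAST L. L > 0 \<and> (s^^L) v = v)"
definition cyc :: "('v \<Rightarrow> 'v) \<Rightarrow> 'v \<Rightarrow> 'v list" where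
  "cyc s v = map (\<lambda>k. (s^^k) v) [0..<Lv s v]"
definition rep :: "('v \<Rightarrow> 'v) \<Rightarrow> 'v \<Rightarrow> 'v" where
  "rep s v = (SOME w. w \<in> set (cyc s v))"

lemma Lv_facts:
  assumes "\<exists>L>0. (s^^L) v = v"
  shows "Lv s v > 0" "(s^^Lv s v) v = v"
  using LeastI_ex[OF assms] unfolding Lv_def by auto

lemma Lv_min:
  assumes "0 < L" "L < Lv s v"
  shows "(s^^L) v \<noteq> v"
  using not_less_Least[of L "\<lambda>L. L > 0 \<and> (s^^L) v = v"] assms unfolding Lv_def by auto

lemma pow_mod:
  assumes "\<exists>L>0. (s^^L) v = v"
  shows "(s^^k) v = (s^^(k mod Lv s v)) v"
  using funpow_mod_eq[where f=s and n="Lv s v" and x=v and m=k] Lv_facts[OF assms] by simp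

lemma cyc_set:
  assumes "\<exists>L>0. (s^^L) v = v"
  shows "set (cyc s v) = range (\<lambda>k. (s^^k) v)"
proof
  show "set (cyc s v) \<subseteq> range (\<lambda>k. (s^^k) v)" unfolding cyc_def by auto
  show "range (\<lambda>k. (s^^k) v) \<subseteq> set (cyc s v)"
  proof
    fix x assume "x \<in> range (\<lambda>k. (s^^k) v)"
    then obtain k where "x = (s^^k) v" by auto
    then have "x = (s^^(k mod Lv s v)) v" using pow_mod[OF assms] by simp
    moreover have "k mod Lv s v < Lv s v" using Lv_facts[OF assms] by simp
    ultimately show "x \<in> set (cyc s v)" unfolding cyc_def by auto
  qed
qed

lemma cyc_distinct:
  assumes "\<exists>L>0. (s^^L) v = v"
  shows "distinct (cyc s v)" "cyc s v \<noteq> []"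
proof -
  show "cyc s v \<noteq> []" using Lv_facts[OF assms] unfolding cyc_def by simp
  show "distinct (cyc s v)" unfolding cyc_def distinct_map
  proof
    show "inj_on (\<lambda>k. (s ^^ k) v) (set [0..<Lv s v])"
    proof (rule inj_onI)
      fix i j assume i: "i \<in> set [0..<Lv s v]" and j: "j \<in> set [0..<Lv s v]" and eq: "(s ^^ i) v = (s ^^ j) v"
      show "i = j"
      proof (rule ccontr)
        assume "i \<noteq> j"
        have gen: "False" if ij: "a < b" "b < Lv s v" "(s ^^ a) v = (s ^^ b) v" for a b
        proof -
          have "(s ^^ (Lv s v - b + a)) v = (s ^^ (Lv s v - b)) ((s^^a) v)" by (simp add: funpow_add)
          also have "\<dots> = (s ^^ (Lv s v - b)) ((s^^b) v)" using ij by simp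
          also have "\<dots> = (s ^^ (Lv s v - b + b)) v" by (simp add: funpow_add)
          also have "\<dots> = v" using ij Lv_facts[OF assms] by simp
          finally have "(s ^^ (Lv s v - b + a)) v = v" .
          moreover have "0 < Lv s v - b + a" "Lv s v - b + a < Lv s v" using ij by auto
          ultimately show False using Lv_min[of "Lv s v - b + a" s v] by (simp del: funpow.simps)
        qed
        show False using \<open>i \<noteq> j\<close> i j eq gen[of i j] gen[of j i] by (cases "i < j") auto
      qed
    qed
  qed simp
qed

lemma ret_closed:
  assumes "\<exists>L>0. (s^^L) v = v"
  shows "\<exists>L>0. (s^^L) ((s^^i) v) = (s^^i) v"
proof -
  obtain L where L: "L > 0" "(s^^L) v = v" using assms by blast
  have "(s^^L) ((s^^i) v) = (s^^i) ((s^^L) v)" by (metis funpow_add add.commute comp_apply)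
  then show ?thesis using L by auto
qed

lemma cyc_set_eq:
  assumes "\<exists>L>0. (s^^L) v = v" "x \<in> set (cyc s v)"
  shows "set (cyc s x) = set (cyc s v)"
proof -
  obtain i where x: "x = (s^^i) v" using cyc_set[OF assms(1)] assms(2) by auto
  have rx: "\<exists>L>0. (s^^L) x = x" using ret_closed[OF assms(1)] x by simp
  have "range (\<lambda>k. (s^^k) x) = range (\<lambda>k. (s^^k) v)"
  proof
    show "range (\<lambda>k. (s^^k) x) \<subseteq> range (\<lambda>k. (s^^k) v)"
    proof
      fix y assume "y \<in> range (\<lambda>k. (s^^k) x)"
      then obtain k where "y = (s^^k) x" by auto
      then have "y = (s^^(k+i)) v" using x by (simp add: funpow_add)
      then show "y \<in> range (\<lambda>k. (s^^k) v)" by blast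
    qed
    show "range (\<lambda>k. (s^^k) v) \<subseteq> range (\<lambda>k. (s^^k) x)"
    proof
      fix y assume "y \<in> range (\<lambda>k. (s^^k) v)"
      then obtain k where y: "y = (s^^k) v" by auto
      define L where "L = Lv s v"
      have "(k + L*(i+1)) mod L = k mod L" by (rule mod_mult_self2)
      then have "(s^^k) v = (s^^(k + L*(i+1))) v" using pow_mod[OF assms(1), of k] pow_mod[OF assms(1), of "k + L*(i+1)"] L_def by simp
      also have "L \<ge> 1" using Lv_facts[OF assms(1)] L_def by simp
      then have "L*(i+1) \<ge> 1*(i+1)" by (rule mult_right_mono) simp
      then have "k + L*(i+1) = (k + L*(i+1) - i) + i" by simp
      also have "(s^^((k + L*(i+1) - i) + i)) v = (s^^(k + L*(i+1) - i)) x" using x by (simp add: funpow_add)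
      finally show "y \<in> range (\<lambda>k. (s^^k) x)" using y by auto
    qed
  qed
  then show ?thesis using cyc_set[OF rx] cyc_set[OF assms(1)] by simp
qed

lemma cyc_edges:
  assumes "\<exists>L>0. (s^^L) v = v"
  shows "cycle_edges (cyc s v) = {(x, s x) | x. x \<in> set (cyc s v)}"
proof -
  have len: "length (cyc s v) = Lv s v" unfolding cyc_def by simp
  have nth: "cyc s v ! i = (s^^i) v" if "i < Lv s v" for i using that unfolding cyc_def by simp
  have "cyc s v ! ((i+1) mod Lv s v) = s ((s^^i) v)" for i
  proof -
    have "cyc s v ! ((i+1) mod Lv s v) = (s^^((i+1) mod Lv s v)) v"
      using nth Lv_facts[OF assms] by simp
    also have "\<dots> = (s^^(i+1)) v" using pow_mod[OF assms] by simp
    finally show ?thesis by simp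
  qed
  then show ?thesis unfolding cycle_edges_def len using nth
    by (auto simp: in_set_conv_nth len)
qed

lemma cycles_from_perm:
  assumes SK: "\<forall>v\<in>K. s v \<in> K" and RET: "\<forall>v\<in>K. \<exists>L>0. (s^^L) v = v"
  shows "disjoint_union_of_simple_cycles K {(x, s x) | x. x \<in> K}"
proof -
  have powK: "(s^^k) v \<in> K" if "v \<in> K" for v k using that SK by (induction k) auto
  have setK: "set (cyc s v) \<subseteq> K" if "v \<in> K" for v using cyc_set[of s v] RET that powK by auto
  have vin: "v \<in> set (cyc s v)" if "v \<in> K" for v using cyc_set[of s v] RET that
    by (metis funpow_0 rangeI)
  have repin: "rep s v \<in> set (cyc s v)" if "v \<in> K" for v
    unfolding rep_def using vin[OF that] by (rule someI)
  have repK: "rep s v \<in> K" if "v \<in> K" for v using repin setK that by blast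
  have setrep: "set (cyc s (rep s v)) = set (cyc s v)" if "v \<in> K" for v
    using cyc_set_eq[of s v "rep s v"] RET that repin by blast
  define C where "C = (\<lambda>v. cyc s (rep s v)) ` K"
  have c1: "\<forall>c\<in>C. c \<noteq> [] \<and> distinct c"
  proof
    fix c assume "c \<in> C"
    then obtain v where v: "v \<in> K" "c = cyc s (rep s v)" unfolding C_def by blast
    then have r: "\<exists>L>0. (s^^L) (rep s v) = rep s v" using RET repK by blast
    show "c \<noteq> [] \<and> distinct c" using cyc_distinct[OF r] v(2) by simp
  qed
  have c2: "\<forall>c\<in>C. \<forall>c'\<in>C. c \<noteq> c' \<longrightarrow> set c \<inter> set c' = {}"
  proof (intro ballI impI)
    fix c c' assume "c \<in> C" "c' \<in> C" "c \<noteq> c'"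
    then obtain v v' where v: "v \<in> K" "v' \<in> K" "c = cyc s (rep s v)" "c' = cyc s (rep s v')" unfolding C_def by blast
    show "set c \<inter> set c' = {}"
    proof (rule ccontr)
      assume "set c \<inter> set c' \<noteq> {}"
      then obtain x where x: "x \<in> set (cyc s v)" "x \<in> set (cyc s v')" using v setrep by auto
      have "set (cyc s v) = set (cyc s v')" using cyc_set_eq[of s v x] cyc_set_eq[of s v' x] x RET v by metis
      then have "rep s v = rep s v'" unfolding rep_def by simp
      then show False using v \<open>c \<noteq> c'\<close> by simp
    qed
  qed
  have c3: "(\<Union>c\<in>C. set c) = K"
  proof
    show "(\<Union>c\<in>C. set c) \<subseteq> K"
    proof
      fix x assume "x \<in> (\<Union>c\<in>C. set c)"
      then obtain v where v: "v \<in> K" "x \<in> set (cyc s (rep s v))" unfolding C_def by auto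
      then show "x \<in> K" using setrep[OF v(1)] setK[OF v(1)] by auto
    qed
    show "K \<subseteq> (\<Union>c\<in>C. set c)"
    proof
      fix v assume v: "v \<in> K"
      then have "v \<in> set (cyc s (rep s v))" using vin setrep by auto
      moreover have "cyc s (rep s v) \<in> C" unfolding C_def using v by auto
      ultimately show "v \<in> (\<Union>c\<in>C. set c)" by auto
    qed
  qed
  have c4: "{(x, s x) | x. x \<in> K} = (\<Union>c\<in>C. cycle_edges c)"
  proof -
    have "cycle_edges c = {(x, s x) | x. x \<in> set c}" if cC: "c \<in> C" for c
    proof -
      obtain v where v: "v \<in> K" "c = cyc s (rep s v)" using cC unfolding C_def by auto
      then have r: "\<exists>L>0. (s^^L) (rep s v) = rep s v" using RET repK by blast
      show ?thesis using cyc_edges[OF r] v(2) by simp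
    qed
    then have "(\<Union>c\<in>C. cycle_edges c) = (\<Union>c\<in>C. {(x, s x) | x. x \<in> set c})" by simp
    also have "\<dots> = {(x, s x) | x. x \<in> (\<Union>c\<in>C. set c)}" by blast
    finally show ?thesis using c3 by simp
  qed
  show ?thesis unfolding disjoint_union_of_simple_cycles_def using c1 c2 c3 c4 by blast
qed


lemma graph_fwd:
  assumes EK: "E \<subseteq> K \<times> K"
    and out: "\<forall>v\<in>K. \<exists>w\<in>K. (v,w)\<in>E" and inn: "\<forall>v\<in>K. \<exists>u\<in>K. (u,v)\<in>E"
    and H: "\<forall>p. walk E p \<longrightarrow> per p"
  shows "disjoint_union_of_simple_cycles K E"
proof -
  define s where "s v = (SOME w. (v,w) \<in> E)" for v
  have sE: "(v, s v) \<in> E" if "v \<in> K" for v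
    unfolding s_def using out that by (meson someI)
  have suniq: "w = s v" if "(v,w) \<in> E" for v w
  proof -
    have "v \<in> K" using that EK by auto
    then show ?thesis using outdeg_unique[OF EK out inn H that sE] by simp
  qed
  have SK: "\<forall>v\<in>K. s v \<in> K" using sE EK by blast
  have RET: "\<forall>v\<in>K. \<exists>L>0. (s^^L) v = v"
  proof
    fix v assume v: "v \<in> K"
    obtain P where P: "walk E P" "P 0 = v" using exists_walk[OF out inn v] by blast
    have Pk: "P (int k) = (s^^k) v" for k
    proof (induction k)
      case 0 then show ?case using P by simp
    next
      case (Suc k)
      have "(P (int k), P (int k + 1)) \<in> E" using P(1) unfolding walk_def by blast
      then have "P (int k + 1) = s (P (int k))" using suniq by blast
      then show ?case using Suc by (simp add: add.commute)
    qed
    obtain d where d: "d \<ge> 1" "\<forall>j. P (j+d) = P j" using H P(1) unfolding per_def by blast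
    have "(s^^(nat d)) v = P (0 + d)" using Pk[of "nat d"] d by simp
    also have "\<dots> = v" using d(2)[rule_format, of 0] P by simp
    finally show "\<exists>L>0. (s^^L) v = v" using d by (intro exI[of _ "nat d"]) simp
  qed
  have "E = {(x, s x) | x. x \<in> K}"
  proof
    show "E \<subseteq> {(x, s x) | x. x \<in> K}"
    proof
      fix e assume "e \<in> E"
      then obtain x w where e: "e = (x,w)" "(x,w) \<in> E" by (cases e) auto
      then have "x \<in> K" "w = s x" using EK suniq by auto
      then show "e \<in> {(x, s x) | x. x \<in> K}" using e by auto
    qed
    show "{(x, s x) | x. x \<in> K} \<subseteq> E" using sE by auto
  qed
  then show ?thesis using cycles_from_perm[OF SK RET] by simp
qed

lemma graph_bwd:
  assumes D: "disjoint_union_of_simple_cycles K E" and w: "walk E p"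
  shows "per p"
proof -
  obtain C where C1: "\<forall>c \<in> C. c \<noteq> [] \<and> distinct c"
    and C2: "\<forall>c \<in> C. \<forall>c' \<in> C. c \<noteq> c' \<longrightarrow> set c \<inter> set c' = {}"
    and C3: "(\<Union>c \<in> C. set c) = K" and C4: "E = (\<Union>c \<in> C. cycle_edges c)"
    using D unfolding disjoint_union_of_simple_cycles_def by blast
  have F: "w' = c ! ((i+1) mod length c)" if c: "c \<in> C" "i < length c" "(c!i, w') \<in> E" for c i w'
  proof -
    obtain c' k where c': "c' \<in> C" "k < length c'" "c!i = c'!k" "w' = c'!((k+1) mod length c')"
      using c(3) unfolding C4 cycle_edges_def by auto
    have "c!i \<in> set c \<inter> set c'" using c c' by (metis IntI nth_mem)
    then have "c = c'" using C2 c c' by blast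
    then have "i = k" using c c' C1 nth_eq_iff_index_eq by metis
    then show ?thesis using c' \<open>c = c'\<close> by simp
  qed
  have fwd: "p (j + int k) = c ! ((i+k) mod length c)" if "c \<in> C" "i < length c" "p j = c!i" for c i j k
  proof (induction k)
    case 0 then show ?case using that by simp
  next
    case (Suc k)
    have L: "length c > 0" using that C1 by auto
    have "(p (j + int k), p (j + int k + 1)) \<in> E" using w unfolding walk_def by blast
    then have "(c ! ((i+k) mod length c), p (j + int k + 1)) \<in> E" using Suc by simp
    then have "p (j + int k + 1) = c ! (((i+k) mod length c + 1) mod length c)"
      using F[OF that(1)] L by simp
    also have "((i+k) mod length c + 1) mod length c = (i + Suc k) mod length c" by (simp add: mod_Suc_eq)
    finally show ?case by (simp add: ac_simps)
  qed
  have EK: "(x, y) \<in> E \<Longrightarrow> x \<in> K" for x y unfolding C4 C3[symmetric] cycle_edges_def using nth_mem by blast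
  have pK: "p j \<in> K" for j using w EK unfolding walk_def by blast
  obtain c0 where c0: "c0 \<in> C" "p 0 \<in> set c0" using pK[of 0] C3 by blast
  have all: "p j \<in> set c0" for j
  proof (cases "j \<ge> 0")
    case True
    obtain i where i: "i < length c0" "p 0 = c0 ! i" using c0 by (metis in_set_conv_nth)
    have "p (0 + int (nat j)) = c0 ! ((i + nat j) mod length c0)" using fwd[OF c0(1) i] by blast
    moreover have "(i + nat j) mod length c0 < length c0" using i by (intro mod_less_divisor) linarith
    ultimately show ?thesis using True by simp
  next
    case False
    obtain c' where c': "c' \<in> C" "p j \<in> set c'" using pK[of j] C3 by blast
    obtain i where i: "i < length c'" "p j = c' ! i" using c' by (metis in_set_conv_nth)
    have "p (j + int (nat (-j))) = c' ! ((i + nat (-j)) mod length c')" using fwd[OF c'(1) i] by blast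
    moreover have "(i + nat (-j)) mod length c' < length c'" using i by (intro mod_less_divisor) linarith
    moreover have "j + int (nat (-j)) = 0" using False by simp
    ultimately have "p 0 \<in> set c'" by (metis nth_mem)
    then have "c' = c0" using C2 c0 c' by blast
    then show ?thesis using c' by simp
  qed
  have L: "length c0 > 0" using c0 C1 by auto
  have "p (j + int (length c0)) = p j" for j
  proof -
    obtain i where i: "i < length c0" "p j = c0 ! i" using all[of j] by (metis in_set_conv_nth)
    have "p (j + int (length c0)) = c0 ! ((i + length c0) mod length c0)" using fwd[OF c0(1) i] by blast
    then show ?thesis using i by simp
  qed
  then show ?thesis unfolding per_def using L by (intro exI[of _ "int (length c0)"]) (auto simp: Suc_le_eq)
qed


lemma fin_tmin_eq:
  assumes "\<forall>i\<le>n. z ! (i + k') = y (int i + K)"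
  shows "fin_tmin a n z k' = tmin a n y K"
  unfolding fin_tmin_def tmin_def
  using assms by (intro arg_cong[where f=Min] image_cong) auto

definition win :: "nat \<Rightarrow> (int \<Rightarrow> real) \<Rightarrow> int \<Rightarrow> real list" where
  "win n y k = map (\<lambda>i. y (k + int i)) [0..<2*n+1]"

lemma win_nth: "i < 2*n+1 \<Longrightarrow> win n y k ! i = y (k + int i)"
  unfolding win_def by (simp del: upt_Suc)

lemma win_vert:
  assumes V: "\<forall>j. y j \<in> Vset n M" and S: "trop_satisfies a n y" and Mi: "trop_minimal a n y"
  shows "win n y k \<in> G0_verts a n M"
proof -
  let ?z = "win n y k"
  have len: "length ?z = 2*n+1" unfolding win_def by simp
  have set: "set ?z \<subseteq> Vset n M" unfolding win_def using V by auto
  have tm: "fin_tmin a n ?z k' = tmin a n y (k + int k')" if "k' \<le> n" for k'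
    by (rule fin_tmin_eq) (use that in \<open>auto simp: win_nth ac_simps\<close>)
  have sat: "fin_satisfies a n (2*n) ?z"
    unfolding fin_satisfies_def
  proof (intro allI impI)
    fix k' assume k': "k' + n \<le> 2*n"
    obtain i1 i2 where i: "i1 \<le> n" "i2 \<le> n" "i1 \<noteq> i2"
      "real_of_int (a i1) + y (int i1 + (k + int k')) = tmin a n y (k + int k')"
      "real_of_int (a i2) + y (int i2 + (k + int k')) = tmin a n y (k + int k')"
      using S unfolding trop_satisfies_def by blast
    have "?z ! (i1 + k') = y (int i1 + (k + int k'))" "?z ! (i2 + k') = y (int i2 + (k + int k'))"
      using i k' by (auto simp: win_nth ac_simps)
    then show "\<exists>i1 i2. i1 \<le> n \<and> i2 \<le> n \<and> i1 \<noteq> i2 \<and>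
           real_of_int (a i1) + ?z ! (i1 + k') = fin_tmin a n ?z k' \<and>
           real_of_int (a i2) + ?z ! (i2 + k') = fin_tmin a n ?z k'"
      using i tm[of k'] k' by (intro exI[of _ i1] exI[of _ i2]) auto
  qed
  have min: "fin_minimal a n (2*n) ?z"
    unfolding fin_minimal_def
  proof (intro allI impI)
    fix j assume j: "n \<le> j \<and> j + n \<le> 2*n"
    then have jn: "j = n" by simp
    obtain K where K: "k + int n - int n \<le> K" "K \<le> k + int n"
      "real_of_int (a (nat (k + int n - K))) + y (k + int n) = tmin a n y K"
      using Mi unfolding trop_minimal_def by blast
    define k' where "k' = nat (K - k)"
    have k'n: "k' \<le> n" and Kk: "K = k + int k'" using K unfolding k'_def by auto
    have "nat (k + int n - K) = n - k'" using Kk k'n by simp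
    moreover have "?z ! n = y (k + int n)" by (simp add: win_nth)
    ultimately have "real_of_int (a (j - k')) + ?z ! j = fin_tmin a n ?z k'"
      using K(3) tm[OF k'n] Kk jn by simp
    then show "\<exists>k. j \<le> k + n \<and> k \<le> j \<and> real_of_int (a (j - k)) + ?z ! j = fin_tmin a n ?z k"
      using k'n jn by auto
  qed
  show ?thesis unfolding G0_verts_def using len set sat min by blast
qed

lemma win_walk:
  assumes V: "\<forall>j. y j \<in> Vset n M" and S: "trop_satisfies a n y" and Mi: "trop_minimal a n y"
  shows "walk (G0_edges a n M) (win n y)"
  unfolding walk_def G0_edges_def
  using win_vert[OF assms] by (auto simp: win_nth ac_simps)

lemma unwin:
  assumes w: "walk (G0_edges a n M) p"
  defines "y \<equiv> (\<lambda>j. p j ! 0)"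
  shows "(\<forall>j. y j \<in> Vset n M) \<and> trop_satisfies a n y \<and> trop_minimal a n y \<and> (\<forall>j. p j = win n y j)"
proof -
  have vert: "p j \<in> G0_verts a n M" for j using w unfolding walk_def G0_edges_def by blast
  have len: "length (p j) = 2*n+1" for j using vert unfolding G0_verts_def by blast
  have shift: "p j ! (i+1) = p (j+1) ! i" if "i < 2*n" for i j
    using w that unfolding walk_def G0_edges_def by blast
  have pe: "p j ! i = y (j + int i)" if "i \<le> 2*n" for i j
    using that
  proof (induction i arbitrary: j)
    case 0 then show ?case unfolding y_def by simp
  next
    case (Suc i)
    have "p j ! (Suc i) = p (j+1) ! i" using shift[of i j] Suc by simp
    also have "\<dots> = y (j + 1 + int i)" using Suc by simp
    finally show ?case by (simp add: ac_simps)
  qed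
  have pw: "p j = win n y j" for j
    by (rule nth_equalityI) (auto simp: len win_nth pe, simp add: win_def)
  have V: "\<forall>j. y j \<in> Vset n M"
  proof
    fix j
    have "y j \<in> set (p j)" unfolding y_def using len[of j] by simp
    then show "y j \<in> Vset n M" using vert[of j] unfolding G0_verts_def by blast
  qed
  have tm: "fin_tmin a n (p j) k' = tmin a n y (j + int k')" if "k' \<le> n" for j k'
    by (rule fin_tmin_eq) (use that in \<open>auto simp: pe ac_simps\<close>)
  have S: "trop_satisfies a n y" unfolding trop_satisfies_def
  proof
    fix k
    have "fin_satisfies a n (2*n) (p k)" using vert[of k] unfolding G0_verts_def by blast
    then obtain i1 i2 where i: "i1 \<le> n" "i2 \<le> n" "i1 \<noteq> i2"
           "real_of_int (a i1) + p k ! (i1 + 0) = fin_tmin a n (p k) 0"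
           "real_of_int (a i2) + p k ! (i2 + 0) = fin_tmin a n (p k) 0"
      unfolding fin_satisfies_def by (metis add_0 le_add_same_cancel2 mult_2 zero_le)
    then show "\<exists>i1 i2. i1 \<le> n \<and> i2 \<le> n \<and> i1 \<noteq> i2 \<and>
         real_of_int (a i1) + y (int i1 + k) = tmin a n y k \<and>
         real_of_int (a i2) + y (int i2 + k) = tmin a n y k"
      using tm[of 0 k] pe[of i1 k] pe[of i2 k] by (intro exI[of _ i1] exI[of _ i2]) (auto simp: ac_simps)
  qed
  have Mi: "trop_minimal a n y" unfolding trop_minimal_def
  proof
    fix j
    have "fin_minimal a n (2*n) (p (j - int n))" using vert unfolding G0_verts_def by blast
    then obtain k' where k': "n \<le> k' + n" "k' \<le> n"
      "real_of_int (a (n - k')) + p (j - int n) ! n = fin_tmin a n (p (j - int n)) k'"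
      unfolding fin_minimal_def by (metis le_refl mult_2)
    have "p (j - int n) ! n = y j" using pe[of n "j - int n"] by simp
    moreover have "nat (j - (j - int n + int k')) = n - k'" using k' by simp
    ultimately show "\<exists>k. j - int n \<le> k \<and> k \<le> j \<and> real_of_int (a (nat (j - k))) + y j = tmin a n y k"
      using k' tm[OF k'(2), of "j - int n"] by (intro exI[of _ "j - int n + int k'"]) auto
  qed
  show ?thesis using V S Mi pw by blast
qed


theorem lemma2:
  fixes n M :: nat and a :: "nat \<Rightarrow> int"
  assumes "n \<ge> 1" and "M \<ge> 1"
    and "\<forall>i \<le> n. 0 \<le> a i \<and> a i \<le> int M"
    and "a 0 = 0" and "a n = 0"
  shows "(\<forall>y :: int \<Rightarrow> real.
            (\<forall>j. y j \<in> Vset n M) \<and> trop_satisfies a n y \<and> trop_minimal a n y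
              \<longrightarrow> trop_periodic y)
         \<longleftrightarrow> disjoint_union_of_simple_cycles (Ga_verts a n M) (Ga_edges a n M)"
proof -
  let ?VS = "G0_verts a n M" and ?E = "G0_edges a n M"
  let ?K = "Ga_verts a n M" and ?EK = "Ga_edges a n M"
  have E0: "?E \<subseteq> ?VS \<times> ?VS" unfolding G0_edges_def by auto
  have Kdef: "?K = {v\<in>?VS. \<not> removed ?VS ?E v}" unfolding Ga_verts_def by simp
  have EKdef: "?EK = ?E \<inter> (?K \<times> ?K)" unfolding Ga_edges_def by simp
  have EK: "?EK \<subseteq> ?K \<times> ?K" unfolding EKdef by auto
  have out: "\<forall>v\<in>?K. \<exists>w\<in>?K. (v,w)\<in>?EK"
  proof
    fix v assume "v \<in> ?K"
    then have "v \<in> ?VS" "\<not> removed ?VS ?E v" unfolding Kdef by auto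
    note vv = this
    obtain w where "w \<in> ?VS \<and> \<not> removed ?VS ?E w \<and> (v,w) \<in> ?E" using core_succ[OF vv] by blast
    then show "\<exists>w\<in>?K. (v,w)\<in>?EK" using \<open>v \<in> ?K\<close> unfolding EKdef Kdef by auto
  qed
  have inn: "\<forall>v\<in>?K. \<exists>u\<in>?K. (u,v)\<in>?EK"
  proof
    fix v assume "v \<in> ?K"
    then have "v \<in> ?VS" "\<not> removed ?VS ?E v" unfolding Kdef by auto
    note vv = this
    obtain u where "u \<in> ?VS \<and> \<not> removed ?VS ?E u \<and> (u,v) \<in> ?E" using core_pred[OF vv] by blast
    then show "\<exists>u\<in>?K. (u,v)\<in>?EK" using \<open>v \<in> ?K\<close> unfolding EKdef Kdef by auto
  qed
  show ?thesis
  proof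
    assume A: "\<forall>y :: int \<Rightarrow> real.
            (\<forall>j. y j \<in> Vset n M) \<and> trop_satisfies a n y \<and> trop_minimal a n y
              \<longrightarrow> trop_periodic y"
    have H: "\<forall>p. walk ?EK p \<longrightarrow> per p"
    proof (intro allI impI)
      fix p assume wp: "walk ?EK p"
      then have w: "walk ?E p" unfolding walk_def EKdef by blast
      define y where "y = (\<lambda>j. p j ! 0)"
      have U: "(\<forall>j. y j \<in> Vset n M) \<and> trop_satisfies a n y \<and> trop_minimal a n y \<and> (\<forall>j. p j = win n y j)"
        using unwin[OF w] unfolding y_def by blast
      then obtain d where d: "d \<ge> 1" "\<forall>j. y (j+d) = y j" using A unfolding trop_periodic_def by blast
      have "p (j + d) = p j" for j
      proof -
        have "win n y (j+d) = win n y j" unfolding win_def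
          using d(2) by (auto simp: ac_simps)
        then show ?thesis using U by metis
      qed
      then show "per p" unfolding per_def using d(1) by blast
    qed
    show "disjoint_union_of_simple_cycles ?K ?EK" by (rule graph_fwd[OF EK out inn H])
  next
    assume D: "disjoint_union_of_simple_cycles ?K ?EK"
    show "\<forall>y :: int \<Rightarrow> real.
            (\<forall>j. y j \<in> Vset n M) \<and> trop_satisfies a n y \<and> trop_minimal a n y
              \<longrightarrow> trop_periodic y"
    proof (intro allI impI)
      fix y :: "int \<Rightarrow> real"
      assume Y: "(\<forall>j. y j \<in> Vset n M) \<and> trop_satisfies a n y \<and> trop_minimal a n y"
      have w: "walk ?E (win n y)" using win_walk Y by blast
      have "walk ?EK (win n y)" unfolding EKdef Kdef by (rule walk_core[OF w E0])
      then have "per (win n y)" using graph_bwd[OF D] by blast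
      then obtain d where d: "d \<ge> 1" "\<forall>j. win n y (j+d) = win n y j" unfolding per_def by blast
      have "y (j + d) = y j" for j
        using arg_cong[where f="\<lambda>l. l ! 0", OF d(2)[rule_format, of j]] by (simp add: win_nth)
      then show "trop_periodic y" unfolding trop_periodic_def using d(1) by blast
    qed
  qed
qed

end
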